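(* Let $1 \le d \le n-1$ and set $c_j = \binom{n-1}{d}/\binom{n-1}{d-j}$ for $0 \le j \le d$. Then in $\mathbb{Q}[x_1,\dots,x_{n+d}]$, $$\binom{n}{d}\, x_1\cdots x_d = \sum_{j=0}^{d} (-1)^j c_j \sum_{\substack{J \subseteq \{1,\dots,n+d\},\ |J| = n\\ |J\cap\{1,\dots,d\}| = d-j}} e_n^d(x_J),$$ where $e_n^d(x_J)$ is the elementary symmetric polynomial of degree $d$ in the $n$ variables $x_i$, $i\in J$. Consequently the same identity holds over any field $K$ in which all $c_j$ are defined (e.g. $\mathrm{char}(K)=0$ or $\mathrm{char}(K)>n$). *)

theory Defs
  imports Main
begin

definition elem_sym :: "nat \<Rightarrow> (nat \<Rightarrow> 'a::comm_ring_1) \<Rightarrow> nat set \<Rightarrow> 'a" where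
  "elem_sym k x J = (\<Sum>S\<in>{S. S \<subseteq> J \<and> card S = k}. \<Prod>i\<in>S. x i)"

end

theory Submission
  imports Defs
begin

lemma diff_shift:
  fixes g :: "nat \<Rightarrow> 'a::comm_ring_1"
  shows "(\<Sum>j\<le>Suc m. (-1)^j * of_nat (Suc m choose j) * g j)
       = (\<Sum>j\<le>m. (-1)^j * of_nat (m choose j) * (g j - g (Suc j)))"
proof -
  have "(\<Sum>j\<le>Suc m. (-1)^j * of_nat (Suc m choose j) * g j)
      = g 0 + (\<Sum>j\<le>m. (-1)^Suc j * of_nat (Suc m choose Suc j) * g (Suc j))"
    by (subst sum.atMost_Suc_shift) simp
  also have "\<dots> = g 0 + (\<Sum>j\<le>m. (-1)^Suc j * of_nat (m choose j) * g (Suc j))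
      + (\<Sum>j\<le>m. (-1)^Suc j * of_nat (m choose Suc j) * g (Suc j))"
    by (simp only: add.assoc flip: sum.distrib) (simp add: algebra_simps)
  also have "(\<Sum>j\<le>m. (-1)^Suc j * of_nat (m choose Suc j) * g (Suc j))
      = (\<Sum>j\<le>Suc m. (-1)^j * of_nat (m choose j) * g j) - g 0"
    by (subst sum.atMost_Suc_shift) simp
  also have "(\<Sum>j\<le>Suc m. (-1)^j * of_nat (m choose j) * g j) = (\<Sum>j\<le>m. (-1)^j * of_nat (m choose j) * g j)"
    by (simp add: binomial_eq_0)
  finally show ?thesis
    by (simp add: sum_subtractf sum_negf algebra_simps)
qed

lemma alt_zero:
  "r < m \<Longrightarrow> (\<Sum>j\<le>m. (-1)^j * of_nat (m choose j) * of_nat ((c+j) choose r)) = (0::'a::comm_ring_1)"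
proof (induction m arbitrary: c r)
  case 0 then show ?case by simp
next
  case (Suc m)
  show ?case
  proof (cases r)
    case 0
    then show ?thesis using choose_alternating_sum[of "Suc m", where 'a='a] by simp
  next
    case (Suc r')
    with Suc.prems have r': "r' < m" by simp
    have "(\<Sum>j\<le>Suc m. (-1)^j * of_nat (Suc m choose j) * (of_nat ((c+j) choose r) :: 'a))
       = (\<Sum>j\<le>m. (-1)^j * of_nat (m choose j) * (of_nat ((c+j) choose r) - of_nat ((c + Suc j) choose r)))"
      by (rule diff_shift)
    also have "\<dots> = - (\<Sum>j\<le>m. (-1)^j * of_nat (m choose j) * of_nat ((c+j) choose r'))"
      by (simp add: Suc sum_negf[symmetric] algebra_simps)
    also have "\<dots> = 0" using Suc.IH[OF r'] by simp
    finally show ?thesis .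
  qed
qed

lemma choose_swap:
  fixes N k r :: nat
  shows "(N choose k) * ((N - k) choose r) = (N choose r) * ((N - r) choose k)"
proof (cases "k + r \<le> N")
  case True
  have "(N choose (k+r)) * ((k+r) choose k) = (N choose k) * ((N - k) choose r)"
    using choose_mult[of k "k+r" N] True by simp
  moreover have "(N choose (k+r)) * ((k+r) choose r) = (N choose r) * ((N - r) choose k)"
    using choose_mult[of r "k+r" N] True by simp
  ultimately show ?thesis by (simp add: binomial_symmetric[of k "k+r"] )
next
  case False
  then show ?thesis by (cases "k \<le> N"; cases "r \<le> N"; simp add: binomial_eq_0)
qed

lemma card_supersets:
  assumes "finite U" "T \<subseteq> U" "k \<le> card U"
  shows "card {A. T \<subseteq> A \<and> A \<subseteq> U \<and> card A = k} = (card U - card T) choose (card U - k)"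
proof -
  have "bij_betw (\<lambda>A. U - A) {A. T \<subseteq> A \<and> A \<subseteq> U \<and> card A = k} {C. C \<subseteq> U - T \<and> card C = card U - k}"
  proof (rule bij_betw_byWitness[where f'="\<lambda>C. U - C"])
    show "\<forall>a\<in>{A. T \<subseteq> A \<and> A \<subseteq> U \<and> card A = k}. U - (U - a) = a" by auto
    show "\<forall>a'\<in>{C. C \<subseteq> U - T \<and> card C = card U - k}. U - (U - a') = a'" by auto
    show "(\<lambda>A. U - A) ` {A. T \<subseteq> A \<and> A \<subseteq> U \<and> card A = k} \<subseteq> {C. C \<subseteq> U - T \<and> card C = card U - k}"
      using assms by (auto simp: card_Diff_subset finite_subset)
    show "(\<lambda>C. U - C) ` {C. C \<subseteq> U - T \<and> card C = card U - k} \<subseteq> {A. T \<subseteq> A \<and> A \<subseteq> U \<and> card A = k}"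
    proof safe
      fix C assume "C \<subseteq> U - T" "card C = card U - k"
      then show "card (U - C) = k" using assms
        by (subst card_Diff_subset) (auto simp: finite_subset)
    qed (use assms in auto)
  qed
  then have "card {A. T \<subseteq> A \<and> A \<subseteq> U \<and> card A = k} = card {C. C \<subseteq> U - T \<and> card C = card U - k}"
    by (rule bij_betw_same_card)
  also have "\<dots> = card (U - T) choose (card U - k)" using assms by (simp add: n_subsets)
  also have "card (U - T) = card U - card T" using assms by (simp add: card_Diff_subset finite_subset)
  finally show ?thesis .
qed

lemma coeff_sum:
  fixes n d m :: nat
  assumes d1: "1 \<le> d" and dn: "d \<le> n - 1"
    and nz: "\<forall>j\<le>d. (of_nat ((n - 1) choose (d - j)) :: 'a::field) \<noteq> 0" and md: "m \<le> d"
  shows "(\<Sum>j\<le>d. (-1)^j * (of_nat ((n - 1) choose d) / of_nat ((n - 1) choose (d - j)))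
            * (of_nat ((m choose j) * ((n - m) choose (d - j))) :: 'a))
         = (if m = 0 then of_nat (n choose d) else 0)"
proof (cases m)
  case 0
  have nz0: "(of_nat ((n - 1) choose d) :: 'a) \<noteq> 0" using nz by (metis diff_zero le0)
  have "(\<Sum>j\<le>d. (-1)^j * (of_nat ((n - 1) choose d) / of_nat ((n - 1) choose (d - j)))
            * (of_nat ((m choose j) * ((n - m) choose (d - j))) :: 'a))
       = (\<Sum>j\<le>d. if j = 0 then of_nat (n choose d) else 0)"
    by (rule sum.cong) (use nz0 0 in \<open>auto simp: binomial_eq_0\<close>)
  then show ?thesis using 0 by simp
next
  case (Suc r)
  define N where "N = n - 1"
  define c where "c = n - 1 - d"
  have rd: "r < d" using Suc md by simp
  have nzr: "(of_nat (N choose r) :: 'a) \<noteq> 0"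
    using nz[rule_format, of "d - r"] rd by (simp add: N_def)
  have termj: "(-1)^j * (of_nat ((n - 1) choose d) / of_nat ((n - 1) choose (d - j)))
            * (of_nat ((m choose j) * ((n - m) choose (d - j))) :: 'a)
      = (of_nat (N choose d) / of_nat (N choose r)) *
          ((-1)^j * of_nat (m choose j) * of_nat ((c + j) choose r))" if j: "j \<le> d" for j
  proof -
    have sw: "(N choose (d - j)) * ((N - (d - j)) choose r) = (N choose r) * ((N - r) choose (d - j))"
      by (rule choose_swap)
    have e1: "N - (d - j) = c + j" using j dn by (simp add: N_def c_def)
    have e2: "N - r = n - m" using Suc by (simp add: N_def)
    have nzj: "(of_nat (N choose (d - j)) :: 'a) \<noteq> 0" using nz j by (simp add: N_def)
    have sw': "(of_nat (N choose (d - j)) :: 'a) * of_nat ((c + j) choose r)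
             = of_nat (N choose r) * of_nat ((n - m) choose (d - j))"
      using arg_cong[OF sw, of "of_nat :: nat \<Rightarrow> 'a"] e1 e2 by simp
    have "(of_nat ((n - m) choose (d - j)) :: 'a) / of_nat (N choose (d - j))
        = of_nat ((c + j) choose r) / of_nat (N choose r)"
      using sw' nzj nzr by (simp add: field_simps)
    note h = this
    have nN: "n - 1 = N" by (simp add: N_def)
    have "(-1)^j * (of_nat ((n - 1) choose d) / of_nat ((n - 1) choose (d - j)))
            * (of_nat ((m choose j) * ((n - m) choose (d - j))) :: 'a)
        = (-1)^j * of_nat (N choose d) * of_nat (m choose j) *
            ((of_nat ((n - m) choose (d - j)) :: 'a) / of_nat (N choose (d - j)))"
      unfolding nN by (simp add: field_simps)
    also have "\<dots> = (-1)^j * of_nat (N choose d) * of_nat (m choose j) *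
            (of_nat ((c + j) choose r) / of_nat (N choose r))" by (simp only: h)
    finally show ?thesis by (simp add: field_simps)
  qed
  have "(\<Sum>j\<le>d. (-1)^j * (of_nat ((n - 1) choose d) / of_nat ((n - 1) choose (d - j)))
            * (of_nat ((m choose j) * ((n - m) choose (d - j))) :: 'a))
      = (of_nat (N choose d) / of_nat (N choose r)) *
          (\<Sum>j\<le>d. (-1)^j * of_nat (m choose j) * of_nat ((c + j) choose r))"
    unfolding sum_distrib_left by (rule sum.cong[OF refl], rule termj) simp
  also have "(\<Sum>j\<le>d. (-1)^j * of_nat (m choose j) * (of_nat ((c + j) choose r) :: 'a))
      = (\<Sum>j\<le>m. (-1)^j * of_nat (m choose j) * of_nat ((c + j) choose r))"
    by (rule sum.mono_neutral_right) (use md in \<open>auto simp: binomial_eq_0\<close>)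
  also have "\<dots> = 0" by (rule alt_zero) (simp add: Suc)
  finally show ?thesis using Suc by simp
qed


lemma count_J:
  fixes n d j :: nat and S :: "nat set"
  assumes SN: "S \<subseteq> {1..n+d}" and cS: "card S = d" and jd: "j \<le> d" and dn: "d \<le> n"
  shows "card {J. J \<subseteq> {1..n+d} \<and> card J = n \<and> card (J \<inter> {1..d}) = d - j \<and> S \<subseteq> J}
       = (card (S - {1..d}) choose j) * ((n - card (S - {1..d})) choose (d - j))"
proof -
  define D where "D = {1..d}"
  define E where "E = {1..n+d} - D"
  define m where "m = card (S - D)"
  have finS: "finite S" using SN finite_subset by blast
  have cD: "card D = d" by (simp add: D_def)
  have ED: "{1..n+d} = D \<union> E" "D \<inter> E = {}" "D \<subseteq> {1..n+d}" by (auto simp: D_def E_def)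
  have cE: "card E = n" unfolding E_def D_def
    using card_Diff_subset[of "{1..d}" "{1..n+d}"] by simp
  have finE: "finite E" "finite D" by (auto simp: E_def D_def)
  have cSD: "card (S \<inter> D) + m = d" unfolding m_def using cS finS
    by (metis card_Int_Diff)
  have md: "m \<le> d" using cSD by simp
  define AA where "AA = {A. S \<inter> D \<subseteq> A \<and> A \<subseteq> D \<and> card A = d - j}"
  define BB where "BB = {B. S - D \<subseteq> B \<and> B \<subseteq> E \<and> card B = n - (d - j)}"
  have setEq: "{J. J \<subseteq> {1..n+d} \<and> card J = n \<and> card (J \<inter> {1..d}) = d - j \<and> S \<subseteq> J}
      = (\<lambda>(A,B). A \<union> B) ` (AA \<times> BB)"
  proof (rule set_eqI, rule iffI)
    fix J assume "J \<in> {J. J \<subseteq> {1..n+d} \<and> card J = n \<and> card (J \<inter> {1..d}) = d - j \<and> S \<subseteq> J}"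
    then have J: "J \<subseteq> {1..n+d}" "card J = n" "card (J \<inter> D) = d - j" "S \<subseteq> J"
      by (auto simp: D_def)
    have finJ: "finite J" using J(1) finite_subset by blast
    have "card (J \<inter> D) + card (J - D) = card J" using finJ by (metis card_Int_Diff)
    then have "card (J - D) = n - (d - j)" using J by simp
    then have "J \<inter> D \<in> AA" "J - D \<in> BB" using J ED by (auto simp: AA_def BB_def)
    moreover have "J = (J \<inter> D) \<union> (J - D)" by blast
    ultimately show "J \<in> (\<lambda>(A,B). A \<union> B) ` (AA \<times> BB)"
      by (intro image_eqI[where x="(J \<inter> D, J - D)"]) simp_all
  next
    fix J assume "J \<in> (\<lambda>(A,B). A \<union> B) ` (AA \<times> BB)"
    then obtain A B where AB: "A \<in> AA" "B \<in> BB" "J = A \<union> B" by auto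
    have fin: "finite A" "finite B" using AB finE finite_subset unfolding AA_def BB_def by auto
    have disj: "A \<inter> B = {}" using AB ED unfolding AA_def BB_def by auto
    have "card J = card A + card B" using AB(3) fin disj by (simp add: card_Un_disjoint)
    also have "\<dots> = n" using AB jd dn unfolding AA_def BB_def by simp
    finally have cJ: "card J = n" .
    have "J \<inter> D = A" using AB ED unfolding AA_def BB_def by auto
    moreover have "J \<subseteq> {1..n+d}" "S \<subseteq> J" using AB ED unfolding AA_def BB_def by auto
    ultimately show "J \<in> {J. J \<subseteq> {1..n+d} \<and> card J = n \<and> card (J \<inter> {1..d}) = d - j \<and> S \<subseteq> J}"
      using cJ AB unfolding AA_def D_def by auto
  qed
  have inj: "inj_on (\<lambda>(A,B). A \<union> B) (AA \<times> BB)"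
  proof (rule inj_onI)
    fix p q assume h0: "p \<in> AA \<times> BB" "q \<in> AA \<times> BB" "(\<lambda>(A,B). A \<union> B) p = (\<lambda>(A,B). A \<union> B) q"
    obtain A B A' B' where pq: "p = (A, B)" "q = (A', B')" by (cases p, cases q) auto
    have h: "A \<in> AA" "B \<in> BB" "A' \<in> AA" "B' \<in> BB" "A \<union> B = A' \<union> B'" using h0 pq by auto
    have "A = (A \<union> B) \<inter> D" "A' = (A' \<union> B') \<inter> D" "B = (A \<union> B) - D" "B' = (A' \<union> B') - D"
      using h ED unfolding AA_def BB_def by auto
    then show "p = q" using h(5) pq by metis
  qed
  have cA: "card AA = m choose j"
  proof -
    have "card AA = (card D - card (S \<inter> D)) choose (card D - (d - j))"
      unfolding AA_def by (rule card_supersets) (use finE cD in auto)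
    also have "card (S \<inter> D) = d - m" using cSD by simp
    also have "card D - (d - m) = m" using cD md by simp
    also have "card D - (d - j) = j" using cD jd by simp
    finally show ?thesis .
  qed
  have cB: "card BB = (n - m) choose (d - j)"
  proof -
    have "card BB = (card E - card (S - D)) choose (card E - (n - (d - j)))"
      unfolding BB_def by (rule card_supersets) (use finE cE SN ED in auto)
    also have "\<dots> = (n - m) choose (d - j)" using cE jd dn by (simp add: m_def)
    finally show ?thesis .
  qed
  show ?thesis
    unfolding setEq card_image[OF inj] card_cartesian_product cA cB
    by (simp add: m_def D_def)
qed


theorem mainTheorem10:
  fixes n d :: nat and x :: "nat \<Rightarrow> 'a::field"
  assumes "1 \<le> d" and "d \<le> n - 1"
    and "\<forall>j\<le>d. (of_nat ((n - 1) choose (d - j)) :: 'a) \<noteq> 0"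
  shows "of_nat (n choose d) * (\<Prod>i\<in>{1..d}. x i) =
    (\<Sum>j\<le>d. (-1) ^ j * (of_nat ((n - 1) choose d) / of_nat ((n - 1) choose (d - j)))
       * (\<Sum>J\<in>{J. J \<subseteq> {1..n + d} \<and> card J = n \<and> card (J \<inter> {1..d}) = d - j}.
            elem_sym d x J))"
proof -
  define w where "w j = (-1) ^ j * ((of_nat ((n - 1) choose d) :: 'a) / of_nat ((n - 1) choose (d - j)))" for j
  define F where "F j = {J. J \<subseteq> {1..n + d} \<and> card J = n \<and> card (J \<inter> {1..d}) = d - j}" for j
  define Sd where "Sd = {S. S \<subseteq> {1..n + d} \<and> card S = d}"
  define P where "P S = (\<Prod>i\<in>S. x i)" for S
  define mS where "mS S = card (S - {1..d})" for S
  have dn: "d \<le> n" using assms by simp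
  have finF: "finite (F j)" for j
    by (rule finite_subset[of _ "Pow {1..n+d}"]) (auto simp: F_def)
  have finSd: "finite Sd"
    by (rule finite_subset[of _ "Pow {1..n+d}"]) (auto simp: Sd_def)
  have step1: "(\<Sum>J\<in>F j. elem_sym d x J)
      = (\<Sum>S\<in>Sd. of_nat ((mS S choose j) * ((n - mS S) choose (d - j))) * P S)" if j: "j \<le> d" for j
  proof -
    have "(\<Sum>J\<in>F j. elem_sym d x J) = (\<Sum>J\<in>F j. \<Sum>S\<in>{S \<in> Sd. S \<subseteq> J}. P S)"
    proof (rule sum.cong[OF refl])
      fix J assume "J \<in> F j"
      then have "{S. S \<subseteq> J \<and> card S = d} = {S \<in> Sd. S \<subseteq> J}"
        by (auto simp: F_def Sd_def)
      then show "elem_sym d x J = (\<Sum>S\<in>{S \<in> Sd. S \<subseteq> J}. P S)"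
        by (simp add: elem_sym_def P_def)
    qed
    also have "\<dots> = (\<Sum>S\<in>Sd. \<Sum>J\<in>{J \<in> F j. S \<subseteq> J}. P S)"
      by (rule sum.swap_restrict[OF finF finSd])
    also have "\<dots> = (\<Sum>S\<in>Sd. of_nat (card {J \<in> F j. S \<subseteq> J}) * P S)"
      by simp
    also have "\<dots> = (\<Sum>S\<in>Sd. of_nat ((mS S choose j) * ((n - mS S) choose (d - j))) * P S)"
    proof (rule sum.cong[OF refl])
      fix S assume S: "S \<in> Sd"
      have "{J \<in> F j. S \<subseteq> J} = {J. J \<subseteq> {1..n+d} \<and> card J = n \<and> card (J \<inter> {1..d}) = d - j \<and> S \<subseteq> J}"
        by (auto simp: F_def)
      also have "card \<dots> = (mS S choose j) * ((n - mS S) choose (d - j))"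
        unfolding mS_def by (rule count_J) (use S j dn in \<open>auto simp: Sd_def\<close>)
      finally show "of_nat (card {J \<in> F j. S \<subseteq> J}) * P S = of_nat ((mS S choose j) * ((n - mS S) choose (d - j))) * P S"
        by simp
    qed
    finally show ?thesis .
  qed
  have "(\<Sum>j\<le>d. w j * (\<Sum>J\<in>F j. elem_sym d x J))
      = (\<Sum>j\<le>d. w j * (\<Sum>S\<in>Sd. of_nat ((mS S choose j) * ((n - mS S) choose (d - j))) * P S))"
    by (rule sum.cong[OF refl]) (simp add: step1)
  also have "\<dots> = (\<Sum>S\<in>Sd. P S * (\<Sum>j\<le>d. w j * of_nat ((mS S choose j) * ((n - mS S) choose (d - j)))))"
    by (simp add: sum_distrib_left sum_distrib_right sum.swap[of _ Sd] algebra_simps)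
  also have "\<dots> = (\<Sum>S\<in>Sd. if S = {1..d} then of_nat (n choose d) * P {1..d} else 0)"
  proof (rule sum.cong[OF refl])
    fix S assume S: "S \<in> Sd"
    have finS: "finite S" using S finite_subset by (auto simp: Sd_def)
    have md: "mS S \<le> d" using S finS unfolding mS_def Sd_def
      using card_mono[OF finS Diff_subset[of S "{1..d}"]] by simp
    have iff: "mS S = 0 \<longleftrightarrow> S = {1..d}"
    proof
      assume "mS S = 0"
      then have "S \<subseteq> {1..d}" using finS by (auto simp: mS_def)
      then show "S = {1..d}" using S by (intro card_subset_eq) (auto simp: Sd_def)
    qed (simp add: mS_def)
    have "(\<Sum>j\<le>d. w j * of_nat ((mS S choose j) * ((n - mS S) choose (d - j))))
        = (if mS S = 0 then of_nat (n choose d) else 0)"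
      unfolding w_def by (rule coeff_sum[OF assms md])
    then show "P S * (\<Sum>j\<le>d. w j * of_nat ((mS S choose j) * ((n - mS S) choose (d - j))))
        = (if S = {1..d} then of_nat (n choose d) * P {1..d} else 0)"
      using iff by (simp add: mult.commute)
  qed
  also have "\<dots> = of_nat (n choose d) * P {1..d}"
  proof -
    have "{1..d} \<in> Sd" by (auto simp: Sd_def)
    then show ?thesis using finSd by (simp add: sum.delta')
  qed
  finally show ?thesis by (simp add: w_def F_def P_def)
qed

end
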